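(* Consider Algorithm 1 applied to $\min\varphi(w)$ s.t. $w\in D$, assume the inner loop always terminates, and let $\{w^j\}$ be the resulting infinite sequence of outer iterates. Assume that $\varphi$ is bounded from below and uniformly continuous on $\mathcal S_\varphi(w^0):=\{w\in D:\varphi(w)\le\varphi(w^0)\}$. Then $\|w^{j+1}-w^j\|\to0$ as $j\to\infty$.
   Context: $\mathbb W$ is a Euclidean space, $\varphi\colon\mathbb W\to\mathbb R$ continuously differentiable, $D\subset\mathbb W$ nonempty and closed (neither need be convex). Algorithm 1 (general spectral gradient method, without termination test): parameters $\tau>1$, $\sigma\in(0,1)$, $0<\gamma_{\min}\le\gamma_{\max}<\infty$, $m\in\mathbb N$, starting point $w^0\in D$. For $j=0,1,2,\dots$: set $m_j:=\min(j,m)$ and choose $\gamma_j^0\in[\gamma_{\min},\gamma_{\max}]$; for $i=1,2,\dots$ set $\gamma_{j,i}:=\tau^{i-1}\gamma_j^0$ and compute a (global) solution $w^{j,i}$ of $\min_w \varphi(w^j)+\langle\nabla\varphi(w^j),w-w^j\rangle+\frac{\gamma_{j,i}}2\|w-w^j\|^2$ s.t. $w\in D$ (subproblem $Q(j,i)$); the inner loop stops at the first $i$ with $\varphi(w^{j,i})\le\max_{r=0,\dots,m_j}\varphi(w^{j-r})+\sigma\langle\nabla\varphi(w^j),w^{j,i}-w^j\rangle$; then set $i_j:=i$, $\gamma_j:=\gamma_{j,i_j}$, $w^{j+1}:=w^{j,i_j}$. *)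

theory Defs
  imports "HOL-Analysis.Analysis"
begin

definition C1_with_gradient :: "('a::euclidean_space \<Rightarrow> real) \<Rightarrow> ('a \<Rightarrow> 'a) \<Rightarrow> bool" where
  "C1_with_gradient phi g \<longleftrightarrow>
     (\<forall>w. (phi has_derivative (\<lambda>h. inner (g w) h)) (at w)) \<and> continuous_on UNIV g"

definition subproblem_obj :: "('a::euclidean_space \<Rightarrow> real) \<Rightarrow> ('a \<Rightarrow> 'a) \<Rightarrow> 'a \<Rightarrow> real \<Rightarrow> 'a \<Rightarrow> real" where
  "subproblem_obj phi g wj gam w =
     phi wj + inner (g wj) (w - wj) + gam / 2 * (norm (w - wj))\<^sup>2"

definition is_global_solution :: "('a::euclidean_space \<Rightarrow> real) \<Rightarrow> ('a \<Rightarrow> 'a) \<Rightarrow> 'a set \<Rightarrow> 'a \<Rightarrow> real \<Rightarrow> 'a \<Rightarrow> bool" where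
  "is_global_solution phi g D wj gam v \<longleftrightarrow>
     v \<in> D \<and> (\<forall>w\<in>D. subproblem_obj phi g wj gam v \<le> subproblem_obj phi g wj gam w)"

definition accepted :: "('a::euclidean_space \<Rightarrow> real) \<Rightarrow> ('a \<Rightarrow> 'a) \<Rightarrow> real \<Rightarrow> nat \<Rightarrow> (nat \<Rightarrow> 'a) \<Rightarrow> nat \<Rightarrow> 'a \<Rightarrow> bool" where
  "accepted phi g \<sigma> m w j v \<longleftrightarrow>
     phi v \<le> Max ((\<lambda>r. phi (w (j - r))) ` {0..min j m}) + \<sigma> * inner (g (w j)) (v - w j)"

text \<open>The sequence w of outer iterates, together with trial points wt j i (i \<ge> 1),
  initial parameters gam0 j and final inner indices ij j, is generated by Algorithm 1
  (with every inner loop terminating).\<close>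
definition spectral_gradient_run ::
  "('a::euclidean_space \<Rightarrow> real) \<Rightarrow> ('a \<Rightarrow> 'a) \<Rightarrow> 'a set \<Rightarrow> real \<Rightarrow> real \<Rightarrow> real \<Rightarrow> real \<Rightarrow> nat
   \<Rightarrow> (nat \<Rightarrow> 'a) \<Rightarrow> (nat \<Rightarrow> real) \<Rightarrow> (nat \<Rightarrow> nat \<Rightarrow> 'a) \<Rightarrow> (nat \<Rightarrow> nat) \<Rightarrow> bool" where
  "spectral_gradient_run phi g D \<tau> \<sigma> \<gamma>min \<gamma>max m w gam0 wt ij \<longleftrightarrow>
     w 0 \<in> D \<and>
     (\<forall>j. \<gamma>min \<le> gam0 j \<and> gam0 j \<le> \<gamma>max \<and> 1 \<le> ij j \<and>
        (\<forall>i. 1 \<le> i \<and> i \<le> ij j \<longrightarrow>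
             is_global_solution phi g D (w j) (\<tau> ^ (i - 1) * gam0 j) (wt j i)) \<and>
        (\<forall>i. 1 \<le> i \<and> i < ij j \<longrightarrow> \<not> accepted phi g \<sigma> m w j (wt j i)) \<and>
        accepted phi g \<sigma> m w j (wt j (ij j)) \<and>
        w (Suc j) = wt j (ij j))"

end

theory Submission
  imports Defs
begin

lemma abstract_gll:
  fixes f d M :: "nat \<Rightarrow> real" and c Ms :: real and m :: nat
  assumes cpos: "c > 0"
    and desc: "\<And>p. f (Suc p) \<le> M p - c * (d p)^2"
    and dnn: "\<And>p. d p \<ge> 0"
    and Mlow: "\<And>p. Ms \<le> M p"
    and Mlim: "\<And>\<delta>. \<delta> > 0 \<Longrightarrow> \<exists>N. \<forall>p\<ge>N. M p < Ms + \<delta>"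
    and uc: "\<And>\<epsilon>. \<epsilon> > 0 \<Longrightarrow> \<exists>\<eta>>0. \<forall>p. d p < \<eta> \<longrightarrow> \<bar>f p - f (Suc p)\<bar> < \<epsilon>"
    and window: "\<And>j. \<exists>q. j < q \<and> q \<le> j + Suc m \<and> f q \<ge> Ms"
  shows "d \<longlonglongrightarrow> 0"
proof -
  have step: "\<exists>\<delta>>0. \<exists>N. \<forall>p\<ge>N. f (Suc p) \<ge> Ms - \<delta> \<longrightarrow> d p < \<epsilon> \<and> f p \<ge> Ms - \<epsilon>"
    if "\<epsilon> > 0" for \<epsilon>
  proof -
    obtain \<eta> where eta: "\<eta> > 0" "\<forall>p. d p < \<eta> \<longrightarrow> \<bar>f p - f (Suc p)\<bar> < \<epsilon>/2"
      using uc[of "\<epsilon>/2"] \<open>\<epsilon>>0\<close> by auto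
    define r where "r = min \<epsilon> \<eta>"
    have r: "r > 0" using eta \<open>\<epsilon>>0\<close> by (simp add: r_def)
    define \<delta> where "\<delta> = min (\<epsilon>/2) (c * r^2 / 4)"
    have dpos: "\<delta> > 0" using r cpos \<open>\<epsilon>>0\<close> by (simp add: \<delta>_def)
    obtain N where N: "\<forall>p\<ge>N. M p < Ms + \<delta>" using Mlim[OF dpos] by auto
    have "d p < \<epsilon> \<and> f p \<ge> Ms - \<epsilon>" if "p \<ge> N" "f (Suc p) \<ge> Ms - \<delta>" for p
    proof -
      have "c * (d p)^2 < 2 * \<delta>" using desc[of p] N that by auto
      also have "\<dots> \<le> c * r^2 / 2" by (simp add: \<delta>_def)
      also have "\<dots> < c * r^2" using cpos r by simp
      finally have "(d p)^2 < r^2" using cpos by simp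
      hence dr: "d p < r" using dnn[of p] r by (smt (verit) power_mono)
      hence "\<bar>f p - f (Suc p)\<bar> < \<epsilon>/2" using eta r_def by auto
      moreover have "\<delta> \<le> \<epsilon>/2" by (simp add: \<delta>_def)
      ultimately have "f p \<ge> Ms - \<epsilon>" using that(2) abs_less_iff[of "f p - f (Suc p)" "\<epsilon>/2"] by linarith
      moreover have "d p < \<epsilon>" using dr r_def by auto
      ultimately show ?thesis by simp
    qed
    thus ?thesis using dpos by blast
  qed
  have C: "\<forall>\<epsilon>>0. \<exists>\<delta>>0. \<exists>N. \<forall>p\<ge>N. f (p+k) \<ge> Ms - \<delta> \<longrightarrow>
          (\<forall>i\<le>k. f (p+i) \<ge> Ms - \<epsilon>) \<and> (\<forall>i<k. d (p+i) < \<epsilon>)" for k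
  proof (induction k)
    case 0
    show ?case
    proof (intro allI impI)
      fix \<epsilon> :: real assume "\<epsilon> > 0"
      thus "\<exists>\<delta>>0. \<exists>N. \<forall>p\<ge>N. f (p+0) \<ge> Ms - \<delta> \<longrightarrow>
          (\<forall>i\<le>0. f (p+i) \<ge> Ms - \<epsilon>) \<and> (\<forall>i<0. d (p+i) < \<epsilon>)"
        by (intro exI[of _ \<epsilon>]) auto
    qed
  next
    case (Suc k)
    show ?case
    proof (intro allI impI)
      fix \<epsilon> :: real assume e: "\<epsilon> > 0"
      obtain \<delta>1 N1 where d1: "\<delta>1 > 0" "\<forall>p\<ge>N1. f (Suc p) \<ge> Ms - \<delta>1 \<longrightarrow> d p < \<epsilon> \<and> f p \<ge> Ms - \<epsilon>"
        using step[OF e] by auto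
      obtain \<delta> N where dN: "\<delta> > 0" "\<forall>p\<ge>N. f (p+k) \<ge> Ms - \<delta> \<longrightarrow>
          (\<forall>i\<le>k. f (p+i) \<ge> Ms - min \<epsilon> \<delta>1) \<and> (\<forall>i<k. d (p+i) < min \<epsilon> \<delta>1)"
        using Suc.IH[rule_format, of "min \<epsilon> \<delta>1"] e d1(1) by auto
      have "(\<forall>i\<le>Suc k. f (p+i) \<ge> Ms - \<epsilon>) \<and> (\<forall>i<Suc k. d (p+i) < \<epsilon>)"
        if p: "p \<ge> max N1 N" and fp: "f (p + Suc k) \<ge> Ms - \<delta>" for p
      proof -
        have h: "(\<forall>i\<le>k. f (Suc p+i) \<ge> Ms - min \<epsilon> \<delta>1) \<and> (\<forall>i<k. d (Suc p+i) < min \<epsilon> \<delta>1)"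
          using dN(2)[rule_format, of "Suc p"] p fp by auto
        hence "f (Suc p) \<ge> Ms - \<delta>1" by (metis add_0_right le0 min.cobounded2 diff_left_mono order_trans)
        hence h0: "d p < \<epsilon> \<and> f p \<ge> Ms - \<epsilon>" using d1(2) p by auto
        show ?thesis
        proof (intro conjI allI impI)
          fix i assume "i \<le> Suc k"
          thus "f (p+i) \<ge> Ms - \<epsilon>"
          proof (cases i)
            case 0 then show ?thesis using h0 by simp
          next
            case (Suc i') then show ?thesis using h \<open>i \<le> Suc k\<close>
              by (smt (verit) Suc_le_mono add_Suc_shift min.cobounded1)
          qed
        next
          fix i assume "i < Suc k"
          thus "d (p+i) < \<epsilon>"
          proof (cases i)
            case 0 then show ?thesis using h0 by simp
          next
            case (Suc i') then show ?thesis using h \<open>i < Suc k\<close>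
              by (smt (verit) Suc_less_eq add_Suc_shift min.cobounded1)
          qed
        qed
      qed
      thus "\<exists>\<delta>>0. \<exists>N. \<forall>p\<ge>N. f (p + Suc k) \<ge> Ms - \<delta> \<longrightarrow>
          (\<forall>i\<le>Suc k. f (p+i) \<ge> Ms - \<epsilon>) \<and> (\<forall>i<Suc k. d (p+i) < \<epsilon>)"
        using dN(1) by blast
    qed
  qed
  have C': "\<forall>\<epsilon>>0. \<exists>\<delta>>0. \<exists>N. \<forall>p\<ge>N. \<forall>k\<le>K. f (p+k) \<ge> Ms - \<delta> \<longrightarrow> (\<forall>i<k. d (p+i) < \<epsilon>)" for K
  proof (induction K)
    case 0
    show ?case by (auto intro!: exI[of _ 1])
  next
    case (Suc K)
    show ?case
    proof (intro allI impI)
      fix \<epsilon> :: real assume e: "\<epsilon> > 0"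
      obtain \<delta>1 N1 where d1: "\<delta>1 > 0" "\<forall>p\<ge>N1. \<forall>k\<le>K. f (p+k) \<ge> Ms - \<delta>1 \<longrightarrow> (\<forall>i<k. d (p+i) < \<epsilon>)"
        using Suc.IH e by blast
      obtain \<delta>2 N2 where d2: "\<delta>2 > 0" "\<forall>p\<ge>N2. f (p+Suc K) \<ge> Ms - \<delta>2 \<longrightarrow> (\<forall>i<Suc K. d (p+i) < \<epsilon>)"
        using C[of "Suc K"] e by blast
      have "\<forall>p\<ge>max N1 N2. \<forall>k\<le>Suc K. f (p+k) \<ge> Ms - min \<delta>1 \<delta>2 \<longrightarrow> (\<forall>i<k. d (p+i) < \<epsilon>)"
      proof (intro allI impI)
        fix p k i assume p: "p \<ge> max N1 N2" and k: "k \<le> Suc K" and fk: "f (p+k) \<ge> Ms - min \<delta>1 \<delta>2" and i: "i < k"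
        show "d (p+i) < \<epsilon>"
        proof (cases "k = Suc K")
          case True
          have "f (p+Suc K) \<ge> Ms - \<delta>2" using fk True min.cobounded2[of \<delta>1 \<delta>2] by simp
          then show ?thesis using d2(2) p i True by auto
        next
          case False
          hence "k \<le> K" using k by simp
          have "f (p+k) \<ge> Ms - \<delta>1" using fk min.cobounded1[of \<delta>1 \<delta>2] by simp
          then show ?thesis using d1(2) p i \<open>k \<le> K\<close> by auto
        qed
      qed
      thus "\<exists>\<delta>>0. \<exists>N. \<forall>p\<ge>N. \<forall>k\<le>Suc K. f (p+k) \<ge> Ms - \<delta> \<longrightarrow> (\<forall>i<k. d (p+i) < \<epsilon>)"
        using d1(1) d2(1) min_less_iff_conj[of 0 \<delta>1 \<delta>2] by blast
    qed
  qed
  show ?thesis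
  proof (rule LIMSEQ_I)
    fix \<epsilon> :: real assume e: "\<epsilon> > 0"
    obtain \<delta> N where dN: "\<delta> > 0" "\<forall>p\<ge>N. \<forall>k\<le>Suc m. f (p+k) \<ge> Ms - \<delta> \<longrightarrow> (\<forall>i<k. d (p+i) < \<epsilon>)"
      using C'[of "Suc m"] e by blast
    have "norm (d j - 0) < \<epsilon>" if "j \<ge> N" for j
    proof -
      obtain q where q: "j < q" "q \<le> j + Suc m" "f q \<ge> Ms" using window by blast
      have "f (j + (q - j)) \<ge> Ms - \<delta>" using q dN(1) by simp
      moreover have "q - j \<le> Suc m" "0 < q - j" using q by auto
      ultimately have "d (j + 0) < \<epsilon>" using dN(2) that by blast
      thus ?thesis using dnn[of j] by simp
    qed
    thus "\<exists>N. \<forall>n\<ge>N. norm (d n - 0) < \<epsilon>" by blast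
  qed
qed

theorem mainTheorem4:
  fixes phi :: "'a::euclidean_space \<Rightarrow> real" and g :: "'a \<Rightarrow> 'a" and D :: "'a set"
    and \<tau> \<sigma> \<gamma>min \<gamma>max :: real and m :: nat
    and w :: "nat \<Rightarrow> 'a" and gam0 :: "nat \<Rightarrow> real" and wt :: "nat \<Rightarrow> nat \<Rightarrow> 'a" and ij :: "nat \<Rightarrow> nat"
  assumes "C1_with_gradient phi g"
    and "D \<noteq> {}" and "closed D"
    and "\<tau> > 1" and "0 < \<sigma>" and "\<sigma> < 1" and "0 < \<gamma>min" and "\<gamma>min \<le> \<gamma>max"
    and "spectral_gradient_run phi g D \<tau> \<sigma> \<gamma>min \<gamma>max m w gam0 wt ij"
    and "\<exists>c. \<forall>v\<in>{v\<in>D. phi v \<le> phi (w 0)}. c \<le> phi v"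
    and "uniformly_continuous_on {v\<in>D. phi v \<le> phi (w 0)} phi"
  shows "(\<lambda>j. norm (w (Suc j) - w j)) \<longlonglongrightarrow> 0"
proof -
  note run = assms(9)[unfolded spectral_gradient_run_def]
  define f where "f j = phi (w j)" for j
  define d where "d j = norm (w (Suc j) - w j)" for j
  define M where "M j = Max ((\<lambda>r. f (j - r)) ` {0..min j m})" for j
  define c where "c = \<sigma> * \<gamma>min / 2"
  define S where "S = {v\<in>D. phi v \<le> phi (w 0)}"
  have cpos: "c > 0" using assms(5,7) by (simp add: c_def)
  have wD: "w j \<in> D" for j
  proof (cases j)
    case 0 then show ?thesis using run by simp
  next
    case (Suc k)
    have "is_global_solution phi g D (w k) (\<tau> ^ (ij k - 1) * gam0 k) (wt k (ij k))"
      using run by auto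
    then show ?thesis using run Suc by (simp add: is_global_solution_def)
  qed
  have inner_bd: "inner (g (w j)) (w (Suc j) - w j) \<le> - (\<gamma>min / 2) * (d j)^2" for j
  proof -
    define \<gamma> where "\<gamma> = \<tau> ^ (ij j - 1) * gam0 j"
    have sol: "is_global_solution phi g D (w j) \<gamma> (w (Suc j))"
      using run by (auto simp: \<gamma>_def)
    hence "subproblem_obj phi g (w j) \<gamma> (w (Suc j)) \<le> subproblem_obj phi g (w j) \<gamma> (w j)"
      using wD unfolding is_global_solution_def by blast
    hence le: "inner (g (w j)) (w (Suc j) - w j) + \<gamma> / 2 * (d j)^2 \<le> 0"
      by (simp add: subproblem_obj_def d_def)
    have "1 \<le> \<tau> ^ (ij j - 1)" using assms(4) by simp
    moreover have "\<gamma>min \<le> gam0 j" using run by auto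
    ultimately have "\<gamma>min \<le> \<gamma>" unfolding \<gamma>_def using assms(7)
      by (smt (verit) mult_le_cancel_right1)
    hence "\<gamma>min / 2 * (d j)^2 \<le> \<gamma> / 2 * (d j)^2"
      by (intro mult_right_mono) auto
    thus ?thesis using le by linarith
  qed
  have fin: "finite ((\<lambda>r. f (j - r)) ` {0..min j m})" for j by simp
  have ne: "(\<lambda>r. f (j - r)) ` {0..min j m} \<noteq> {}" for j by simp
  have fM: "f j \<le> M j" for j
    unfolding M_def by (rule Max_ge[OF fin]) (rule image_eqI[of _ _ 0], auto)
  have desc: "f (Suc p) \<le> M p - c * (d p)^2" for p
  proof -
    have acc: "accepted phi g \<sigma> m w p (w (Suc p))" using run by metis
    hence "f (Suc p) \<le> M p + \<sigma> * inner (g (w p)) (w (Suc p) - w p)"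
      by (simp add: accepted_def f_def M_def)
    also have "\<sigma> * inner (g (w p)) (w (Suc p) - w p) \<le> \<sigma> * (- (\<gamma>min / 2) * (d p)^2)"
      using inner_bd assms(5) by (intro mult_left_mono) auto
    finally show ?thesis by (simp add: c_def)
  qed
  have dnn: "d p \<ge> 0" for p by (simp add: d_def)
  have Mdec: "M (Suc j) \<le> M j" for j
  proof -
    have "x \<le> M j" if "x \<in> (\<lambda>r. f (Suc j - r)) ` {0..min (Suc j) m}" for x
    proof -
      obtain r where r: "r \<le> min (Suc j) m" "x = f (Suc j - r)" using \<open>x \<in> _\<close> by auto
      show ?thesis
      proof (cases r)
        case 0
        then show ?thesis using r desc[of j] cpos dnn[of j]
          by (smt (verit) mult_nonneg_nonneg zero_le_power2 diff_zero)
      next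
        case (Suc r')
        have "x = f (j - r')" using r Suc by simp
        moreover have "r' \<in> {0..min j m}" using r Suc by auto
        ultimately show ?thesis unfolding M_def by (intro Max_ge[OF fin]) auto
      qed
    qed
    thus ?thesis unfolding M_def[of "Suc j"] using fin ne by (simp add: Max_le_iff)
  qed
  have decM: "decseq M" using Mdec by (simp add: decseq_SucI)
  have M0: "M 0 = f 0" by (simp add: M_def)
  have wS: "w j \<in> S" for j
  proof -
    have "f j \<le> f 0" using fM[of j] decseqD[OF decM, of 0 j] M0 by simp
    thus ?thesis using wD by (simp add: S_def f_def)
  qed
  obtain c0 where c0: "\<forall>v\<in>S. c0 \<le> phi v" using assms(10) S_def by auto
  have Mlb: "c0 \<le> M j" for j using c0 wS[of j] fM[of j] by (force simp: f_def)
  have bdd: "bdd_below (range M)" using Mlb by (intro bdd_belowI[of _ c0]) auto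
  define Ms where "Ms = Inf (range M)"
  have Mlow: "Ms \<le> M p" for p unfolding Ms_def using bdd by (simp add: cInf_lower)
  have Mlim: "\<exists>N. \<forall>p\<ge>N. M p < Ms + \<delta>" if "\<delta> > 0" for \<delta>
  proof -
    have "Inf (range M) < Ms + \<delta>" using that Ms_def by simp
    then obtain N where "M N < Ms + \<delta>" using cInf_less_iff[of "range M"] bdd by auto
    thus ?thesis using decseqD[OF decM] by (meson order.strict_trans1)
  qed
  have uc: "\<exists>\<eta>>0. \<forall>p. d p < \<eta> \<longrightarrow> \<bar>f p - f (Suc p)\<bar> < \<epsilon>" if "\<epsilon> > 0" for \<epsilon>
  proof -
    have "uniformly_continuous_on S phi" using assms(11) by (simp add: S_def)
    hence "\<forall>e>0. \<exists>d>0. \<forall>x\<in>S. \<forall>x'\<in>S. dist x' x < d \<longrightarrow> dist (phi x') (phi x) < e"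
      by (simp only: uniformly_continuous_on_def)
    hence "\<exists>d>0. \<forall>x\<in>S. \<forall>x'\<in>S. dist x' x < d \<longrightarrow> dist (phi x') (phi x) < \<epsilon>"
      using that by blast
    then obtain \<eta> where eta: "\<eta> > 0" "\<forall>x\<in>S. \<forall>x'\<in>S. dist x' x < \<eta> \<longrightarrow> dist (phi x') (phi x) < \<epsilon>"
      by blast
    have "\<bar>f p - f (Suc p)\<bar> < \<epsilon>" if "d p < \<eta>" for p
    proof -
      have "dist (w (Suc p)) (w p) < \<eta>" using that by (simp add: d_def dist_norm)
      hence "dist (phi (w (Suc p))) (phi (w p)) < \<epsilon>" using eta wS by blast
      thus ?thesis by (simp add: f_def dist_real_def abs_minus_commute)
    qed
    thus ?thesis using eta(1) by blast
  qed
  have window: "\<exists>q. j < q \<and> q \<le> j + Suc m \<and> f q \<ge> Ms" for j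
  proof -
    have "M (j + Suc m) \<in> (\<lambda>r. f (j + Suc m - r)) ` {0..min (j + Suc m) m}"
      unfolding M_def by (rule Max_in[OF fin ne])
    then obtain r where r: "r \<le> m" "M (j + Suc m) = f (j + Suc m - r)" by auto
    show ?thesis
      using r Mlow[of "j + Suc m"] by (intro exI[of _ "j + Suc m - r"]) auto
  qed
  have "d \<longlonglongrightarrow> 0"
    by (rule abstract_gll[OF cpos desc dnn Mlow Mlim uc window])
  thus ?thesis by (simp add: d_def[abs_def])
qed

end
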